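(* Let $X$ be a finite set, $f:2^X\to\mathbb{R}_{\ge0}$ a normalized monotone submodular function possessing supermodularity of conditioning, $n\le|X|$ a positive integer and $S^*\in\arg\max_{S\subseteq X,\,|S|\le n}f(S)$. Let $x_1,\dots,x_n\in X$ be arbitrary distinct elements, $S_0=\emptyset$, $S_i=\{x_1,\dots,x_i\}$. For each $i$ let $M_i:=\max_{x\in X\setminus S_{i-1}}\bar f(x\mid S_{i-1})$ and define $\beta_i:=\underline f(x_i\mid S_{i-1})/M_i$ if $\underline f(x_i\mid S_{i-1})>0$, and $\beta_i:=0$ otherwise. Then \[ f(S_n)\ \ge\ \left(1-e^{-\frac1n\sum_{i=1}^n\beta_i}\right)f(S^* ). \] (Here $\beta_i$ plays the role of $1/\alpha_i$ with $\alpha_i=M_i/\underline f(x_i\mid S_{i-1})$, and $\alpha_i=\infty$ when the lower estimate is not positive.)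
   Context: $f(x\mid A):=f(A\cup\{x\})-f(A)$, $f(x):=f(\{x\})$, $f(x\mid y):=f(x\mid\{y\})$. Pairwise upper estimate: $\bar f(x\mid S):=\min_{A\subseteq S,|A|\le1}f(x\mid A)$ (so $\bar f(x\mid\emptyset)=f(x)$). Pairwise lower estimate: $\underline f(x\mid S):=f(x)-\sum_{y\in S}(f(x)-f(x\mid y))$. Supermodularity of conditioning: for all $S\subseteq X$, $A\subseteq B\subseteq X$, $C\subseteq X\setminus B$, $f(S\mid A)-f(S\mid A\cup C)\ge f(S\mid B)-f(S\mid B\cup C)$, where $f(T\mid A):=f(A\cup T)-f(A)$. *)

theory Defs
  imports Complex_Main
begin

definition cond_gain :: "('a set \<Rightarrow> real) \<Rightarrow> 'a set \<Rightarrow> 'a set \<Rightarrow> real" where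
  "cond_gain f T A = f (A \<union> T) - f A"

definition marg :: "('a set \<Rightarrow> real) \<Rightarrow> 'a \<Rightarrow> 'a set \<Rightarrow> real" where
  "marg f x A = f (A \<union> {x}) - f A"

definition upper_est :: "('a set \<Rightarrow> real) \<Rightarrow> 'a \<Rightarrow> 'a set \<Rightarrow> real" where
  "upper_est f x S = Min ((\<lambda>A. marg f x A) ` {A. A \<subseteq> S \<and> finite A \<and> card A \<le> 1})"

definition lower_est :: "('a set \<Rightarrow> real) \<Rightarrow> 'a \<Rightarrow> 'a set \<Rightarrow> real" where
  "lower_est f x S = f {x} - (\<Sum>y\<in>S. f {x} - marg f x {y})"

definition normalized :: "('a set \<Rightarrow> real) \<Rightarrow> bool" where
  "normalized f \<longleftrightarrow> f {} = 0"

definition nonneg_on :: "'a set \<Rightarrow> ('a set \<Rightarrow> real) \<Rightarrow> bool" where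
  "nonneg_on X f \<longleftrightarrow> (\<forall>A. A \<subseteq> X \<longrightarrow> 0 \<le> f A)"

definition monotone_set_fun :: "'a set \<Rightarrow> ('a set \<Rightarrow> real) \<Rightarrow> bool" where
  "monotone_set_fun X f \<longleftrightarrow> (\<forall>A B. A \<subseteq> B \<and> B \<subseteq> X \<longrightarrow> f A \<le> f B)"

definition submodular :: "'a set \<Rightarrow> ('a set \<Rightarrow> real) \<Rightarrow> bool" where
  "submodular X f \<longleftrightarrow> (\<forall>A B. A \<subseteq> X \<and> B \<subseteq> X \<longrightarrow> f (A \<union> B) + f (A \<inter> B) \<le> f A + f B)"

definition supermod_conditioning :: "'a set \<Rightarrow> ('a set \<Rightarrow> real) \<Rightarrow> bool" where
  "supermod_conditioning X f \<longleftrightarrow>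
     (\<forall>S A B C. S \<subseteq> X \<and> A \<subseteq> B \<and> B \<subseteq> X \<and> C \<subseteq> X - B \<longrightarrow>
        cond_gain f S A - cond_gain f S (A \<union> C) \<ge> cond_gain f S B - cond_gain f S (B \<union> C))"

end

theory Submission
  imports Defs
begin



lemma dimret:
  assumes mono: "monotone_set_fun X f" and sub: "submodular X f"
    and "A \<subseteq> B" "B \<subseteq> X" "y \<in> X"
  shows "marg f y B \<le> marg f y A"
proof (cases "y \<in> B")
  case True
  then have "marg f y B = 0" unfolding marg_def by (simp add: insert_absorb)
  moreover have "f A \<le> f (A \<union> {y})"
  proof -
    have m: "\<And>A B. A \<subseteq> B \<Longrightarrow> B \<subseteq> X \<Longrightarrow> f A \<le> f B"
      using mono unfolding monotone_set_fun_def by blast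
    have "A \<union> {y} \<subseteq> X" using assms by auto
    then show ?thesis by (rule m[rotated]) auto
  qed
  ultimately show ?thesis unfolding marg_def by simp
next
  case False
  have "f ((A \<union> {y}) \<union> B) + f ((A \<union> {y}) \<inter> B) \<le> f (A \<union> {y}) + f B"
  proof -
    have m: "\<And>A B. A \<subseteq> X \<Longrightarrow> B \<subseteq> X \<Longrightarrow> f (A \<union> B) + f (A \<inter> B) \<le> f A + f B"
      using sub unfolding submodular_def by blast
    have "A \<union> {y} \<subseteq> X" using assms by auto
    then show ?thesis using m assms(4) by blast
  qed
  moreover have "(A \<union> {y}) \<union> B = B \<union> {y}" using assms by auto
  moreover have "(A \<union> {y}) \<inter> B = A" using assms False by auto
  ultimately show ?thesis unfolding marg_def by simp
qed

lemma marg_nonneg: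
  assumes mono: "monotone_set_fun X f" and "A \<subseteq> X" "y \<in> X"
  shows "0 \<le> marg f y A"
proof -
  have m: "\<And>A B. A \<subseteq> B \<Longrightarrow> B \<subseteq> X \<Longrightarrow> f A \<le> f B"
    using mono unfolding monotone_set_fun_def by blast
  have "A \<union> {y} \<subseteq> X" using assms by auto
  then have "f A \<le> f (A \<union> {y})" by (rule m[rotated]) auto
  then show ?thesis unfolding marg_def by simp
qed

lemma sub_sum:
  assumes mono: "monotone_set_fun X f" and sub: "submodular X f"
    and "finite T" "T \<subseteq> X" "S \<subseteq> X"
  shows "f (S \<union> T) \<le> f S + (\<Sum>y\<in>T. marg f y S)"
  using assms(3,4)
proof (induction T rule: finite_induct)
  case empty then show ?case by simp
next
  case (insert y T)
  have "marg f y (S \<union> T) \<le> marg f y S"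
    by (rule dimret[OF mono sub]) (use insert assms in auto)
  moreover have "f (S \<union> insert y T) = f (S \<union> T) + marg f y (S \<union> T)"
    unfolding marg_def by (simp add: Un_insert_right)
  ultimately show ?case using insert by simp
qed

lemma lower_le:
  assumes sc: "supermod_conditioning X f" and nz: "normalized f"
    and "finite S" "S \<subseteq> X" "z \<in> X"
  shows "lower_est f z S \<le> marg f z S"
  using assms(3,4)
proof (induction S rule: finite_induct)
  case empty then show ?case using nz unfolding lower_est_def marg_def normalized_def by simp
next
  case (insert y T)
  have "cond_gain f {z} {} - cond_gain f {z} ({} \<union> {y}) \<ge> cond_gain f {z} T - cond_gain f {z} (T \<union> {y})"
  proof -
    have sc': "\<And>S A B C. S \<subseteq> X \<Longrightarrow> A \<subseteq> B \<Longrightarrow> B \<subseteq> X \<Longrightarrow> C \<subseteq> X - B \<Longrightarrow>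
        cond_gain f S A - cond_gain f S (A \<union> C) \<ge> cond_gain f S B - cond_gain f S (B \<union> C)"
      using sc unfolding supermod_conditioning_def by blast
    show ?thesis by (rule sc') (use insert assms in auto)
  qed
  then have "f {z} - marg f z {y} \<ge> marg f z T - marg f z (insert y T)"
    using nz unfolding cond_gain_def marg_def normalized_def by simp
  moreover have "lower_est f z (insert y T) = lower_est f z T - (f {z} - marg f z {y})"
    unfolding lower_est_def using insert by simp
  ultimately show ?case using insert by simp
qed

lemma upper_ge:
  assumes mono: "monotone_set_fun X f" and sub: "submodular X f"
    and "finite S" "S \<subseteq> X" "y \<in> X"
  shows "marg f y S \<le> upper_est f y S"
proof -
  let ?F = "{A. A \<subseteq> S \<and> finite A \<and> card A \<le> 1}"
  have fin: "finite ?F"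
    by (rule finite_subset[of _ "Pow S"]) (use assms(3) in auto)
  have ne: "{} \<in> ?F" by simp
  have "\<forall>a\<in>(\<lambda>A. marg f y A) ` ?F. marg f y S \<le> a"
  proof
    fix a assume "a \<in> (\<lambda>A. marg f y A) ` ?F"
    then obtain A where A: "A \<subseteq> S" "a = marg f y A" by auto
    show "marg f y S \<le> a" unfolding A(2) by (rule dimret[OF mono sub A(1) assms(4,5)])
  qed
  moreover have "finite ((\<lambda>A. marg f y A) ` ?F)" using fin by simp
  moreover have "(\<lambda>A. marg f y A) ` ?F \<noteq> {}" using ne by blast
  ultimately show ?thesis unfolding upper_est_def by simp
qed



lemma key:
  fixes X :: "'a set" and f :: "'a set \<Rightarrow> real" and n :: nat
    and Sstar :: "'a set" and x :: "nat \<Rightarrow> 'a"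
  assumes finX: "finite X"
    and nz: "normalized f" and "nonneg_on X f" and mono: "monotone_set_fun X f" and sub: "submodular X f"
    and sc: "supermod_conditioning X f"
    and npos: "0 < n" and "n \<le> card X"
    and SsX: "Sstar \<subseteq> X" and cS: "card Sstar \<le> n"
    and opt: "\<forall>S. S \<subseteq> X \<and> card S \<le> n \<longrightarrow> f S \<le> f Sstar"
    and xX: "x ` {1..n} \<subseteq> X" and inj: "inj_on x {1..n}"
    and Sd: "S = (\<lambda>i. x ` {1..i})"
    and Md: "M = (\<lambda>i. Max ((\<lambda>y. upper_est f y (S (i - 1))) ` (X - S (i - 1))))"
    and bd: "beta = (\<lambda>i. if lower_est f (x i) (S (i - 1)) > 0
                          then lower_est f (x i) (S (i - 1)) / M i else 0)"
  shows "f (S n) \<ge> (1 - exp (- (1 / real n) * (\<Sum>i=1..n. beta i))) * f Sstar"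
proof -
  have mm: "\<And>A B. A \<subseteq> B \<Longrightarrow> B \<subseteq> X \<Longrightarrow> f A \<le> f B"
    using mono unfolding monotone_set_fun_def by blast
  have SX: "S i \<subseteq> X" if "i \<le> n" for i using xX that unfolding Sd by auto
  have Sfin: "finite (S i)" for i unfolding Sd by simp
  have Scard: "card (S i) = i" if "i \<le> n" for i
  proof -
    have "inj_on x {1..i}" by (rule inj_on_subset[OF inj]) (use that in auto)
    then show ?thesis unfolding Sd by (simp add: card_image)
  qed
  have gnn: "f (S i) \<le> f Sstar" if "i \<le> n" for i
    by (rule opt[rule_format]) (use SX[OF that] Scard[OF that] that in simp)
  have step: "f Sstar - f (S i) \<le> exp (- (beta i / real n)) * (f Sstar - f (S (i - 1)))"
    if i1: "1 \<le> i" and "i \<le> n" for i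
  proof -
    define P where "P = S (i - 1)"
    have Pe: "S (i - Suc 0) = P" unfolding P_def by simp
    have PX: "P \<subseteq> X" unfolding P_def using SX that by simp
    have Pfin: "finite P" unfolding P_def by (rule Sfin)
    have xiX: "x i \<in> X" using xX that by auto
    have xiP: "x i \<notin> P"
    proof
      assume "x i \<in> P"
      then obtain j where j: "j \<in> {1..i-1}" "x i = x j" unfolding P_def Sd by auto
      have "j \<in> {1..n}" "i \<in> {1..n}" using that j by auto
      then have "i = j" using inj j(2) unfolding inj_on_def by blast
      then show False using j(1) i1 by simp
    qed
    have "{1..i} = insert i {1..i-1}" using i1 by auto
    then have SiP: "S i = insert (x i) P" unfolding P_def Sd by simp
    have gain: "f (S i) - f P = marg f (x i) P" unfolding SiP marg_def by simp
    have g0: "0 \<le> f Sstar - f P" unfolding P_def using gnn that by simp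
    show ?thesis
    proof (cases "lower_est f (x i) P > 0")
      case False
      then have "beta i = 0" unfolding bd P_def by simp
      moreover have "0 \<le> marg f (x i) P" by (rule marg_nonneg[OF mono PX xiX])
      ultimately show ?thesis using gain unfolding P_def by simp
    next
      case True
      define L where "L = lower_est f (x i) P"
      have Lpos: "0 < L" using True L_def by simp
      have Mi: "M i = Max ((\<lambda>y. upper_est f y P) ` (X - P))" unfolding Md P_def by simp
      have finI: "finite ((\<lambda>y. upper_est f y P) ` (X - P))" using finX by simp
      have Mge: "upper_est f y P \<le> M i" if "y \<in> X - P" for y
        unfolding Mi using finI that by (intro Max_ge) auto
      have L_le: "L \<le> marg f (x i) P" unfolding L_def by (rule lower_le[OF sc nz Pfin PX xiX])
      have "marg f (x i) P \<le> M i"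
        using upper_ge[OF mono sub Pfin PX xiX] Mge[of "x i"] xiX xiP by simp
      then have Mpos: "0 < M i" using Lpos L_le by simp
      have bi: "beta i = L / M i" using True by (simp add: bd Pe L_def)
      have "f Sstar \<le> f (P \<union> (Sstar - P))"
        by (rule mm) (use SsX PX in auto)
      also have "\<dots> \<le> f P + (\<Sum>y\<in>Sstar - P. marg f y P)"
        by (rule sub_sum[OF mono sub]) (use SsX PX finite_subset[OF _ finX] in auto)
      also have "(\<Sum>y\<in>Sstar - P. marg f y P) \<le> of_nat (card (Sstar - P)) * M i"
      proof (rule sum_bounded_above)
        fix y assume "y \<in> Sstar - P"
        then show "marg f y P \<le> M i"
          using upper_ge[OF mono sub Pfin PX, of y] Mge[of y] SsX by auto
      qed
      also have "of_nat (card (Sstar - P)) * M i \<le> real n * M i"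
      proof -
        have "card (Sstar - P) \<le> card Sstar"
          using SsX finite_subset[OF SsX finX] by (intro card_mono) auto
        then show ?thesis using cS Mpos by (intro mult_right_mono) auto
      qed
      finally have gb: "f Sstar - f P \<le> real n * M i" by simp
      have "beta i / real n * (f Sstar - f P) \<le> beta i / real n * (real n * M i)"
        using gb bi Lpos Mpos npos by (intro mult_left_mono) auto
      also have "\<dots> = L" using bi Mpos npos by simp
      finally have "beta i / real n * (f Sstar - f P) \<le> f (S i) - f P" using gain L_le by simp
      moreover have "(1 - beta i / real n) * (f Sstar - f P) = (f Sstar - f P) - beta i / real n * (f Sstar - f P)"
        by (simp only: left_diff_distrib mult_1)
      ultimately have "f Sstar - f (S i) \<le> (1 - beta i / real n) * (f Sstar - f P)"
        by linarith
      also have "\<dots> \<le> exp (- (beta i / real n)) * (f Sstar - f P)"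
        using g0 exp_ge_add_one_self[of "- (beta i / real n)"] by (intro mult_right_mono) auto
      finally show ?thesis unfolding P_def .
    qed
  qed
  have main: "f Sstar - f (S i) \<le> exp (- (1 / real n) * (\<Sum>j=1..i. beta j)) * f Sstar"
    if "i \<le> n" for i
    using that
  proof (induction i)
    case 0
    have "S 0 = {}" unfolding Sd by simp
    then show ?case using nz unfolding normalized_def by simp
  next
    case (Suc k)
    have "f Sstar - f (S (Suc k)) \<le> exp (- (beta (Suc k) / real n)) * (f Sstar - f (S k))"
      using step[of "Suc k"] Suc.prems by simp
    also have "\<dots> \<le> exp (- (beta (Suc k) / real n)) * (exp (- (1 / real n) * (\<Sum>j=1..k. beta j)) * f Sstar)"
      using Suc by (intro mult_left_mono) auto
    also have "\<dots> = exp (- (1 / real n) * (\<Sum>j=1..Suc k. beta j)) * f Sstar"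
    proof -
      have "(\<Sum>j=1..Suc k. beta j) = (\<Sum>j=1..k. beta j) + beta (Suc k)" by simp
      then have e: "- (1 / real n) * (\<Sum>j=1..Suc k. beta j) = - (beta (Suc k) / real n) + - (1 / real n) * (\<Sum>j=1..k. beta j)"
        by (simp add: divide_simps)
      show ?thesis by (simp only: e exp_add mult.assoc)
    qed
    finally show ?case .
  qed
  have "(1 - exp (- (1 / real n) * (\<Sum>i=1..n. beta i))) * f Sstar = f Sstar - exp (- (1 / real n) * (\<Sum>i=1..n. beta i)) * f Sstar"
    by (simp only: left_diff_distrib mult_1)
  with main[of n] show ?thesis by linarith
qed

theorem mainTheorem8:
  fixes X :: "'a set" and f :: "'a set \<Rightarrow> real" and n :: nat
    and Sstar :: "'a set" and x :: "nat \<Rightarrow> 'a"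
  assumes "finite X"
    and "normalized f" and "nonneg_on X f" and "monotone_set_fun X f" and "submodular X f"
    and "supermod_conditioning X f"
    and "0 < n" and "n \<le> card X"
    and "Sstar \<subseteq> X" and "card Sstar \<le> n"
    and "\<forall>S. S \<subseteq> X \<and> card S \<le> n \<longrightarrow> f S \<le> f Sstar"
    and "x ` {1..n} \<subseteq> X" and "inj_on x {1..n}"
  shows "let S = (\<lambda>i. x ` {1..i});
             M = (\<lambda>i. Max ((\<lambda>y. upper_est f y (S (i - 1))) ` (X - S (i - 1))));
             beta = (\<lambda>i. if lower_est f (x i) (S (i - 1)) > 0
                          then lower_est f (x i) (S (i - 1)) / M i else 0)
         in f (S n) \<ge> (1 - exp (- (1 / real n) * (\<Sum>i=1..n. beta i))) * f Sstar"
  unfolding Let_def by (rule key[OF assms refl refl refl])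

end
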